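(* Let $\mathbb{I}>0$ and, for $\ell>0$, let $g(\ell)=4\ell^2\int_0^\infty u^2\,\Phi\big(-\frac{u\ell\sqrt{\mathbb{I}}}{2}\big)\phi(u)\,du$. Then $g$ is maximized at $\ell_{opt}=\frac{2.426}{\sqrt{\mathbb{I}}}$ (constant given to three decimals), and the corresponding acceptance rate $$\alpha_{opt}=4\int_0^\infty\Phi\Big(-\frac{u\ell_{opt}\sqrt{\mathbb{I}}}{2}\Big)\phi(u)\,du$$ equals $0.439$ up to three decimal places.
   Context: $\Phi$ and $\phi$ are the standard normal cdf and density. In the paper, $g(\ell)$ is the diffusion speed of the limiting Langevin diffusion of the additive TMCMC chain for i.i.d. product targets $\prod_i f(x_i)$, with $\mathbb{I}=E_f[(f'(X)/f(X))^2]$, and $\alpha_{opt}$ is the limiting expected acceptance rate at scaling $\ell_{opt}$. *)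

theory Defs
  imports "HOL-Probability.Probability"
begin

definition phi :: "real \<Rightarrow> real" where
  "phi u = exp (- (u^2) / 2) / sqrt (2 * pi)"

definition Phi :: "real \<Rightarrow> real" where
  "Phi x = (LBINT t:{..x}. phi t)"

definition speed :: "real \<Rightarrow> real \<Rightarrow> real" where
  "speed II l = 4 * l^2 * (LBINT u:{0<..}. u^2 * Phi (- (u * l * sqrt II) / 2) * phi u)"

definition acc_rate :: "real \<Rightarrow> real \<Rightarrow> real" where
  "acc_rate II l = 4 * (LBINT u:{0<..}. Phi (- (u * l * sqrt II) / 2) * phi u)"

end

theory Submission
  imports Defs "HOL-Real_Asymp.Real_Asymp"
begin

lemma G3:
  fixes a :: real assumes a: "a > 0"
  shows "(\<integral>\<^sup>+u. ennreal (u^3 * exp (-(a*u^2)/2)) * indicator {0..} u \<partial>lborel) = ennreal (2/a^2)"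
proof -
  have "(\<integral>\<^sup>+u. ennreal (u^3 * exp (-(a*u^2)/2)) * indicator {0..} u \<partial>lborel)
      = ennreal (0 - (- (a*0^2+2)/a^2 * exp (-(a*0^2)/2)))"
  proof (rule nn_integral_FTC_atLeast)
    show "(\<lambda>u. u^3 * exp (-(a*u^2)/2)) \<in> borel_measurable borel" by measurable
    fix x :: real assume "0 \<le> x"
    show "DERIV (\<lambda>u. - (a*u^2+2)/a^2 * exp (-(a*u^2)/2)) x :> x^3 * exp (-(a*x^2)/2)"
      using a by (auto intro!: derivative_eq_intros simp: field_simps power2_eq_square power3_eq_cube)
    show "0 \<le> x^3 * exp (-(a*x^2)/2)" using \<open>0 \<le> x\<close> by simp
  next
    show "((\<lambda>u. - (a*u^2+2)/a^2 * exp (-(a*u^2)/2)) \<longlongrightarrow> 0) at_top" using a by real_asymp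
  qed
  then show ?thesis by simp
qed

lemma G1:
  fixes a :: real assumes a: "a > 0"
  shows "(\<integral>\<^sup>+u. ennreal (u * exp (-(a*u^2)/2)) * indicator {0..} u \<partial>lborel) = ennreal (1/a)"
proof -
  have "(\<integral>\<^sup>+u. ennreal (u * exp (-(a*u^2)/2)) * indicator {0..} u \<partial>lborel)
      = ennreal (0 - (- exp (-(a*0^2)/2) / a))"
  proof (rule nn_integral_FTC_atLeast)
    show "(\<lambda>u. u * exp (-(a*u^2)/2)) \<in> borel_measurable borel" by measurable
    fix x :: real assume "0 \<le> x"
    show "DERIV (\<lambda>u. - exp (-(a*u^2)/2) / a) x :> x * exp (-(a*x^2)/2)"
      using a by (auto intro!: derivative_eq_intros simp: field_simps power2_eq_square)
    show "0 \<le> x * exp (-(a*x^2)/2)" using \<open>0 \<le> x\<close> by simp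
  next
    show "((\<lambda>u. - exp (-(a*u^2)/2) / a) \<longlongrightarrow> 0) at_top" using a by real_asymp
  qed
  then show ?thesis by simp
qed

lemma onepw_nz: "1 + (w::real)^2 \<noteq> 0"
  by (smt (verit) zero_le_power2)

lemma W2:
  fixes s :: real
  shows "(\<integral>\<^sup>+w. ennreal (1/(1+w^2)^2) * indicator {s..} w \<partial>lborel) = ennreal (pi/4 - (arctan s + s/(1+s^2))/2)"
proof (rule nn_integral_FTC_atLeast)
  show "(\<lambda>w::real. 1/(1+w^2)^2) \<in> borel_measurable borel"
    apply (rule borel_measurable_continuous_onI, rule continuous_on_divide)
    by (auto intro!: continuous_intros simp: onepw_nz)
  fix x :: real assume "s \<le> x"
  define t where "t = 1 + x^2"
  have t: "t \<noteq> 0" unfolding t_def by (rule onepw_nz)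
  show "DERIV (\<lambda>w. (arctan w + w/(1+w^2))/2) x :> 1/(1+x^2)^2"
  apply (rule derivative_eq_intros refl onepw_nz)+
  unfolding t_def[symmetric] using t apply (simp_all add: field_simps)
  unfolding t_def by (simp add: power2_eq_square algebra_simps)
  show "0 \<le> 1/(1+x^2)^2" by simp
next
  show "((\<lambda>w. (arctan w + w/(1+w^2))/2) \<longlongrightarrow> pi/4) at_top" by real_asymp
qed

lemma W1:
  fixes s :: real
  shows "(\<integral>\<^sup>+w. ennreal (1/(1+w^2)) * indicator {s..} w \<partial>lborel) = ennreal (pi/2 - arctan s)"
proof (rule nn_integral_FTC_atLeast)
  show "(\<lambda>w::real. 1/(1+w^2)) \<in> borel_measurable borel"
    apply (rule borel_measurable_continuous_onI, rule continuous_on_divide)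
    by (auto intro!: continuous_intros simp: onepw_nz)
  fix x :: real assume "s \<le> x"
  show "DERIV arctan x :> 1/(1+x^2)"
    by (rule derivative_eq_intros refl)+ (simp add: divide_inverse)
  show "0 \<le> 1/(1+x^2)" by (simp add: add_pos_nonneg)
next
  show "(arctan \<longlongrightarrow> pi/2) at_top" by (rule tendsto_arctan_at_top)
qed

lemma phi_std: "phi u = std_normal_density u"
  by (simp add: phi_def std_normal_density_def)

lemma phi_nonneg: "0 \<le> phi u"
  by (simp add: phi_def)

lemma phi_even: "phi (-u) = phi u"
  by (simp add: phi_def)

lemma phi_meas[measurable]: "phi \<in> borel_measurable borel"
  unfolding phi_def by measurable

lemma phi_int: "integrable lborel phi"
  unfolding phi_std[abs_def] by simp

lemma Phi_enn: "ennreal (Phi x) = (\<integral>\<^sup>+t. ennreal (phi t * indicator {..x} t) \<partial>lborel)"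
proof -
  have i: "integrable lborel (\<lambda>t. phi t * indicator {..x} t)"
    by (rule integrable_real_mult_indicator) (auto simp: phi_int)
  have "Phi x = (\<integral>t. phi t * indicator {..x} t \<partial>lborel)"
    unfolding Phi_def set_lebesgue_integral_def by (simp add: mult.commute)
  then show ?thesis
    by (simp add: nn_integral_eq_integral[OF i] phi_nonneg)
qed

lemma Phi_mono: "mono Phi"
proof
  fix x y :: real assume "x \<le> y"
  have "ennreal (Phi x) \<le> ennreal (Phi y)"
    unfolding Phi_enn
    by (intro nn_integral_mono) (use \<open>x \<le> y\<close> in \<open>auto simp: phi_nonneg split: split_indicator\<close>)
  moreover have "Phi y \<ge> 0"
    unfolding Phi_def set_lebesgue_integral_def by (intro integral_nonneg_AE) (simp add: phi_nonneg)
  ultimately show "Phi x \<le> Phi y" by simp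
qed

lemma Phi_meas[measurable]: "Phi \<in> borel_measurable borel"
  by (rule borel_measurable_mono[OF Phi_mono])

lemma Phi_nonneg: "0 \<le> Phi x"
  unfolding Phi_def set_lebesgue_integral_def by (intro integral_nonneg_AE) (simp add: phi_nonneg)

lemma Phi_sub:
  assumes u: "u > 0"
  shows "ennreal (Phi (- (u * s))) = ennreal u * (\<integral>\<^sup>+w. ennreal (phi (u*w) * indicator {s..} w) \<partial>lborel)"
proof -
  have "ennreal (Phi (- (u * s))) = \<bar>-u\<bar> * (\<integral>\<^sup>+w. ennreal (phi (0 + (-u)*w) * indicator {.. -(u * s)} (0 + (-u)*w)) \<partial>lborel)"
    unfolding Phi_enn by (rule nn_integral_real_affine) (use u in auto)
  also have "(\<lambda>w. ennreal (phi (0 + (-u)*w) * indicator {.. -(u * s)} (0 + (-u)*w))) = (\<lambda>w. ennreal (phi (u*w) * indicator {s..} w))"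
  proof
    fix w
    have "phi (0 + (-u)*w) = phi (u*w)" using phi_even[of "u*w"] by simp
    moreover have "indicator {.. -(u * s)} (0 + (-u)*w) = (indicator {s..} w :: real)"
      using u by (auto simp: indicator_def)
    ultimately show "ennreal (phi (0 + (-u)*w) * indicator {.. -(u * s)} (0 + (-u)*w)) = ennreal (phi (u*w) * indicator {s..} w)"
      by simp
  qed
  finally show ?thesis using u by simp
qed

lemma phiphi: "phi u * phi (u*w) = exp (- ((1+w^2)*u^2)/2) / (2*pi)"
proof -
  have "phi u * phi (u*w) = exp(- (u^2)/2) * exp(- ((u*w)^2)/2) / (sqrt(2*pi) * sqrt(2*pi))"
    by (simp add: phi_def)
  also have "\<dots> = exp(- (u^2)/2 + -((u*w)^2)/2) / (2*pi)"
    by (simp add: exp_add[symmetric])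
  also have "-(u^2)/2 + -((u*w)^2)/2 = -((1+w^2)*u^2)/2"
    by (simp add: algebra_simps power_mult_distrib)
  finally show ?thesis .
qed

lemma I2_nn:
  assumes s: "s \<ge> 0"
  shows "(\<integral>\<^sup>+u. ennreal (indicator {0<..} u * (u^2 * Phi (- (u * s)) * phi u)) \<partial>lborel)
       = ennreal ((pi/4 - (arctan s + s/(1+s^2))/2) / pi)"
proof -
  let ?F = "\<lambda>u w. ennreal (indicator {0<..} u * u^3 * phi u * phi (u*w) * indicator {s..} w)"
  have step1: "(\<integral>\<^sup>+u. ennreal (indicator {0<..} u * (u^2 * Phi (- (u * s)) * phi u)) \<partial>lborel)
      = (\<integral>\<^sup>+u. (\<integral>\<^sup>+w. ?F u w \<partial>lborel) \<partial>lborel)"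
  proof (rule nn_integral_cong)
    fix u :: real
    show "ennreal (indicator {0<..} u * (u^2 * Phi (- (u * s)) * phi u)) = (\<integral>\<^sup>+w. ?F u w \<partial>lborel)"
    proof (cases "u > 0")
      case True
      have "ennreal (indicator {0<..} u * (u^2 * Phi (- (u * s)) * phi u))
          = ennreal (u^2 * phi u) * ennreal (Phi (- (u * s)))"
        using True by (simp add: ennreal_mult'[symmetric] Phi_nonneg phi_nonneg mult_ac)
      also have "\<dots> = ennreal (u^2 * phi u) * (ennreal u * (\<integral>\<^sup>+w. ennreal (phi (u*w) * indicator {s..} w) \<partial>lborel))"
        by (simp add: Phi_sub[OF True])
      also have "\<dots> = ennreal (u^3 * phi u) * (\<integral>\<^sup>+w. ennreal (phi (u*w) * indicator {s..} w) \<partial>lborel)"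
      proof -
        have "ennreal (u^2 * phi u) * ennreal u = ennreal (u^3 * phi u)"
          using True by (simp add: ennreal_mult'[symmetric] phi_nonneg power3_eq_cube power2_eq_square mult_ac)
        then show ?thesis by (metis mult.assoc)
      qed
      also have "\<dots> = (\<integral>\<^sup>+w. ennreal (u^3 * phi u) * ennreal (phi (u*w) * indicator {s..} w) \<partial>lborel)"
        by (rule nn_integral_cmult[symmetric]) measurable
      also have "\<dots> = (\<integral>\<^sup>+w. ?F u w \<partial>lborel)"
        using True by (intro nn_integral_cong) (simp add: ennreal_mult'[symmetric] phi_nonneg mult_ac)
      finally show ?thesis .
    qed simp
  qed
  also have "\<dots> = (\<integral>\<^sup>+w. (\<integral>\<^sup>+u. ?F u w \<partial>lborel) \<partial>lborel)"
    by (rule lborel_pair.Fubini'[symmetric]) measurable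
  also have "\<dots> = (\<integral>\<^sup>+w. ennreal (1/pi) * (ennreal (1/(1+w^2)^2) * indicator {s..} w) \<partial>lborel)"
  proof (rule nn_integral_cong)
    fix w :: real
    show "(\<integral>\<^sup>+u. ?F u w \<partial>lborel) = ennreal (1/pi) * (ennreal (1/(1+w^2)^2) * indicator {s..} w)"
    proof (cases "s \<le> w")
      case True
      have a: "1 + w^2 > 0" by (simp add: add_pos_nonneg)
      have "(\<integral>\<^sup>+u. ?F u w \<partial>lborel) = (\<integral>\<^sup>+u. ennreal (1/(2*pi)) * (ennreal (u^3 * exp (-((1+w^2)*u^2)/2)) * indicator {0..} u) \<partial>lborel)"
      proof (rule nn_integral_cong)
        fix u :: real
        show "?F u w = ennreal (1/(2*pi)) * (ennreal (u^3 * exp (-((1+w^2)*u^2)/2)) * indicator {0..} u)"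
        proof (cases "u > 0")
          case True
          have "indicator {0<..} u * u^3 * phi u * phi (u*w) * indicator {s..} w = u^3 * (phi u * phi (u*w))"
            using True \<open>s \<le> w\<close> by simp
          also have "\<dots> = 1/(2*pi) * (u^3 * exp (-((1+w^2)*u^2)/2))"
            by (simp add: phiphi)
          finally have e: "indicator {0<..} u * u^3 * phi u * phi (u*w) * indicator {s..} w = 1/(2*pi) * (u^3 * exp (-((1+w^2)*u^2)/2))" .
          show ?thesis unfolding e using True
            by (subst ennreal_mult) auto
        next
          case False
          then show ?thesis by (cases "u = 0") (auto simp: indicator_def)
        qed
      qed
      also have "\<dots> = ennreal (1/(2*pi)) * ennreal (2/(1+w^2)^2)"
        using G3[OF a] by (subst nn_integral_cmult) auto
      also have "\<dots> = ennreal (1/pi) * (ennreal (1/(1+w^2)^2) * indicator {s..} w)"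
        using True by (simp add: ennreal_mult'[symmetric])
      finally show ?thesis .
    qed (auto simp: indicator_def)
  qed
  also have "\<dots> = ennreal (1/pi) * ennreal (pi/4 - (arctan s + s/(1+s^2))/2)"
    by (subst nn_integral_cmult) (auto simp: W2 intro!: borel_measurable_continuous_onI continuous_on_divide continuous_intros onepw_nz)
  also have "\<dots> = ennreal ((pi/4 - (arctan s + s/(1+s^2))/2) / pi)"
    by (simp add: ennreal_mult'[symmetric])
  finally show ?thesis .
qed

lemma J0_nn:
  assumes s: "s \<ge> 0"
  shows "(\<integral>\<^sup>+u. ennreal (indicator {0<..} u * (Phi (- (u * s)) * phi u)) \<partial>lborel)
       = ennreal ((pi/2 - arctan s) / (2*pi))"
proof -
  let ?F = "\<lambda>u w. ennreal (indicator {0<..} u * u * phi u * phi (u*w) * indicator {s..} w)"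
  have step1: "(\<integral>\<^sup>+u. ennreal (indicator {0<..} u * (Phi (- (u * s)) * phi u)) \<partial>lborel)
      = (\<integral>\<^sup>+u. (\<integral>\<^sup>+w. ?F u w \<partial>lborel) \<partial>lborel)"
  proof (rule nn_integral_cong)
    fix u :: real
    show "ennreal (indicator {0<..} u * (Phi (- (u * s)) * phi u)) = (\<integral>\<^sup>+w. ?F u w \<partial>lborel)"
    proof (cases "u > 0")
      case True
      have "ennreal (indicator {0<..} u * (Phi (- (u * s)) * phi u))
          = ennreal (phi u) * ennreal (Phi (- (u * s)))"
        using True by (simp add: ennreal_mult'[symmetric] Phi_nonneg phi_nonneg mult_ac)
      also have "\<dots> = ennreal (phi u) * (ennreal u * (\<integral>\<^sup>+w. ennreal (phi (u*w) * indicator {s..} w) \<partial>lborel))"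
        by (simp add: Phi_sub[OF True])
      also have "\<dots> = ennreal (u * phi u) * (\<integral>\<^sup>+w. ennreal (phi (u*w) * indicator {s..} w) \<partial>lborel)"
      proof -
        have "ennreal (phi u) * ennreal u = ennreal (u * phi u)"
          using True by (simp add: ennreal_mult'[symmetric] phi_nonneg mult_ac)
        then show ?thesis by (metis mult.assoc)
      qed
      also have "\<dots> = (\<integral>\<^sup>+w. ennreal (u * phi u) * ennreal (phi (u*w) * indicator {s..} w) \<partial>lborel)"
        by (rule nn_integral_cmult[symmetric]) measurable
      also have "\<dots> = (\<integral>\<^sup>+w. ?F u w \<partial>lborel)"
        using True by (intro nn_integral_cong) (simp add: ennreal_mult'[symmetric] phi_nonneg mult_ac)
      finally show ?thesis .
    qed simp
  qed
  also have "\<dots> = (\<integral>\<^sup>+w. (\<integral>\<^sup>+u. ?F u w \<partial>lborel) \<partial>lborel)"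
    by (rule lborel_pair.Fubini'[symmetric]) measurable
  also have "\<dots> = (\<integral>\<^sup>+w. ennreal (1/(2*pi)) * (ennreal (1/(1+w^2)) * indicator {s..} w) \<partial>lborel)"
  proof (rule nn_integral_cong)
    fix w :: real
    show "(\<integral>\<^sup>+u. ?F u w \<partial>lborel) = ennreal (1/(2*pi)) * (ennreal (1/(1+w^2)) * indicator {s..} w)"
    proof (cases "s \<le> w")
      case True
      have a: "1 + w^2 > 0" by (simp add: add_pos_nonneg)
      have "(\<integral>\<^sup>+u. ?F u w \<partial>lborel) = (\<integral>\<^sup>+u. ennreal (1/(2*pi)) * (ennreal (u * exp (-((1+w^2)*u^2)/2)) * indicator {0..} u) \<partial>lborel)"
      proof (rule nn_integral_cong)
        fix u :: real
        show "?F u w = ennreal (1/(2*pi)) * (ennreal (u * exp (-((1+w^2)*u^2)/2)) * indicator {0..} u)"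
        proof (cases "u > 0")
          case True
          have "indicator {0<..} u * u * phi u * phi (u*w) * indicator {s..} w = u * (phi u * phi (u*w))"
            using True \<open>s \<le> w\<close> by simp
          also have "\<dots> = 1/(2*pi) * (u * exp (-((1+w^2)*u^2)/2))"
            by (simp add: phiphi)
          finally have e: "indicator {0<..} u * u * phi u * phi (u*w) * indicator {s..} w = 1/(2*pi) * (u * exp (-((1+w^2)*u^2)/2))" .
          show ?thesis unfolding e using True
            by (subst ennreal_mult) auto
        next
          case False
          then show ?thesis by (cases "u = 0") (auto simp: indicator_def)
        qed
      qed
      also have "\<dots> = ennreal (1/(2*pi)) * ennreal (1/(1+w^2))"
        using G1[OF a] by (subst nn_integral_cmult) auto
      also have "\<dots> = ennreal (1/(2*pi)) * (ennreal (1/(1+w^2)) * indicator {s..} w)"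
        using True by simp
      finally show ?thesis .
    qed (auto simp: indicator_def)
  qed
  also have "\<dots> = ennreal (1/(2*pi)) * ennreal (pi/2 - arctan s)"
    by (subst nn_integral_cmult) (auto simp: W1 intro!: borel_measurable_continuous_onI continuous_on_divide continuous_intros onepw_nz)
  also have "\<dots> = ennreal ((pi/2 - arctan s) / (2*pi))"
    by (subst ennreal_mult'[symmetric]) (auto simp: arctan_ubound less_imp_le)
  finally show ?thesis .
qed

lemma onepw_nz2: "1 + (w::real)^2 \<noteq> 0"
  by (smt (verit) zero_le_power2)
lemma onepw_nz2p: "(1 + (w::real)^2)^n \<noteq> 0"
  using onepw_nz2 by simp

definition rr :: "real \<Rightarrow> real" where
  "rr s = pi/2 - arctan s - s/(1+s^2) - s/(1+s^2)^2"

definition hh :: "real \<Rightarrow> real" where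
  "hh s = s^2 * ((pi/4 - (arctan s + s/(1+s^2))/2)/pi)"

lemma d1: "DERIV arctan (x::real) :> 1/(1+x^2)"
  by (rule derivative_eq_intros refl)+ (simp add: divide_inverse)

lemma d2: "DERIV (\<lambda>s. s/(1+s^2)) (x::real) :> (1-x^2)/(1+x^2)^2"
proof -
  define t where "t = 1 + x^2"
  have t: "t \<noteq> 0" unfolding t_def by (rule onepw_nz2)
  show ?thesis
  apply (rule derivative_eq_intros refl onepw_nz2 onepw_nz2p)+
  unfolding t_def[symmetric] using t apply (simp_all add: field_simps)
  unfolding t_def by (simp add: power2_eq_square algebra_simps)
qed

lemma d3: "DERIV (\<lambda>s. s/(1+s^2)^2) (x::real) :> (1-3*x^2)/(1+x^2)^3"
proof -
  define t where "t = 1 + x^2"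
  have t: "t \<noteq> 0" unfolding t_def by (rule onepw_nz2)
  show ?thesis
  apply (rule derivative_eq_intros refl onepw_nz2 onepw_nz2p)+
  unfolding t_def[symmetric] using t apply (simp_all add: field_simps)
  unfolding t_def by (simp add: power2_eq_square) algebra
qed

lemma rr_deriv: "DERIV rr x :> (x^2 - 3)/(1+x^2)^3"
proof -
  have "DERIV (\<lambda>s. pi/2 - arctan s - s/(1+s^2) - s/(1+s^2)^2) x :> 0 - 1/(1+x^2) - (1-x^2)/(1+x^2)^2 - (1-3*x^2)/(1+x^2)^3"
    by (intro DERIV_diff d1 d2 d3 DERIV_const)
  moreover have "0 - 1/(1+x^2) - (1-x^2)/(1+x^2)^2 - (1-3*x^2)/(1+x^2)^3 = (x^2 - 3)/(1+x^2)^3"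
  proof -
    define t where "t = 1 + x^2"
    have t: "t \<noteq> 0" unfolding t_def by (rule onepw_nz2)
    have x2: "x^2 = t - 1" unfolding t_def by simp
    show ?thesis unfolding t_def[symmetric] x2 using t by (simp add: field_simps) algebra
  qed
  ultimately show ?thesis unfolding rr_def[abs_def] by simp
qed

lemma hh_deriv: "DERIV hh (x::real) :> x * rr x / pi"
proof -
  have dF: "DERIV (\<lambda>s. arctan s + s/(1+s^2)) x :> 1/(1+x^2) + (1-x^2)/(1+x^2)^2"
    by (rule DERIV_add[OF d1 d2])
  have dG: "DERIV (\<lambda>s. (pi/4 - (arctan s + s/(1+s^2))/2)/pi) x :> ((0 - (1/(1+x^2) + (1-x^2)/(1+x^2)^2)/2)/pi)"
    by (intro DERIV_cdivide DERIV_diff DERIV_const dF)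
  have dP: "DERIV (\<lambda>s. s^2) x :> real 2 * x^(2 - Suc 0)" by (rule DERIV_pow)
  have d: "DERIV hh x :> real 2 * x^(2 - Suc 0) * ((pi/4 - (arctan x + x/(1+x^2))/2)/pi) + ((0 - (1/(1+x^2) + (1-x^2)/(1+x^2)^2)/2)/pi) * x^2"
    unfolding hh_def[abs_def] by (rule DERIV_mult[OF dP dG])
  have e: "real 2 * x^(2 - Suc 0) * ((pi/4 - (arctan x + x/(1+x^2))/2)/pi) + ((0 - (1/(1+x^2) + (1-x^2)/(1+x^2)^2)/2)/pi) * x^2 = x * rr x / pi"
  proof -
    define t where "t = 1 + x^2"
    have t: "t \<noteq> 0" unfolding t_def by (rule onepw_nz2)
    have x2: "x^2 = t - 1" unfolding t_def by simp
    show ?thesis unfolding rr_def t_def[symmetric] x2 using t x2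
      by (simp add: field_simps) algebra
  qed
  show ?thesis using d e by simp
qed

lemma arctan_lower7:
  assumes "0 \<le> (y::real)"
  shows "y - y^3/3 + y^5/5 - y^7/7 \<le> arctan y"
proof -
  let ?g = "\<lambda>x::real. arctan x - (x - x^3/3 + x^5/5 - x^7/7)"
  have "?g 0 \<le> ?g y"
  proof (rule DERIV_nonneg_imp_nondecreasing[OF assms])
    fix x :: real assume "0 \<le> x" "x \<le> y"
    have dp0: "DERIV (\<lambda>x::real. x - x^3/3 + x^5/5 - x^7/7) x :> 1 - real 3 * x^(3 - Suc 0)/3 + real 5 * x^(5 - Suc 0)/5 - real 7 * x^(7 - Suc 0)/7"
      by (intro DERIV_diff DERIV_add DERIV_cdivide DERIV_pow DERIV_ident)
    have dp: "DERIV (\<lambda>x::real. x - x^3/3 + x^5/5 - x^7/7) x :> 1 - x^2 + x^4 - x^6"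
      using dp0 by simp
    have "DERIV ?g x :> 1/(1+x^2) - (1 - x^2 + x^4 - x^6)"
      by (rule DERIV_diff[OF d1 dp])
    moreover have "1/(1+x^2) - (1 - x^2 + x^4 - x^6) = x^8/(1+x^2)"
      using onepw_nz2[of x] by (simp add: field_simps)
    moreover have "x^8/(1+x^2) \<ge> 0" by (simp add: add_pos_nonneg)
    ultimately show "\<exists>d. DERIV ?g x :> d \<and> 0 \<le> d" by auto
  qed
  then show ?thesis by simp
qed

lemma arctan_upper5:
  assumes "0 \<le> (y::real)"
  shows "arctan y \<le> y - y^3/3 + y^5/5"
proof -
  let ?g = "\<lambda>x::real. (x - x^3/3 + x^5/5) - arctan x"
  have "?g 0 \<le> ?g y"
  proof (rule DERIV_nonneg_imp_nondecreasing[OF assms])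
    fix x :: real assume "0 \<le> x" "x \<le> y"
    have dp0: "DERIV (\<lambda>x::real. x - x^3/3 + x^5/5) x :> 1 - real 3 * x^(3 - Suc 0)/3 + real 5 * x^(5 - Suc 0)/5"
      by (intro DERIV_diff DERIV_add DERIV_cdivide DERIV_pow DERIV_ident)
    have dp: "DERIV (\<lambda>x::real. x - x^3/3 + x^5/5) x :> 1 - x^2 + x^4"
      using dp0 by simp
    have "DERIV ?g x :> (1 - x^2 + x^4) - 1/(1+x^2)"
      by (rule DERIV_diff[OF dp d1])
    moreover have "(1 - x^2 + x^4) - 1/(1+x^2) = x^6/(1+x^2)"
      using onepw_nz2[of x] by (simp add: field_simps)
    moreover have "x^6/(1+x^2) \<ge> 0" by (simp add: add_pos_nonneg)
    ultimately show "\<exists>d. DERIV ?g x :> d \<and> 0 \<le> d" by auto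
  qed
  then show ?thesis by simp
qed

lemma arctan_shift:
  assumes "s > (0::real)"
  shows "arctan s = pi/4 + arctan ((s-1)/(s+1))"
proof -
  have "arctan 1 + arctan ((s-1)/(s+1)) = arctan ((1 + (s-1)/(s+1)) / (1 - 1 * ((s-1)/(s+1))))"
    by (rule arctan_add) (use assms in \<open>auto simp: abs_less_iff field_simps\<close>)
  also have "(1 + (s-1)/(s+1)) / (1 - 1 * ((s-1)/(s+1))) = s"
    using assms by (simp add: field_simps)
  finally show ?thesis by (simp add: arctan_one)
qed

lemma rr_alt: "s > 0 \<Longrightarrow> rr s = pi/4 - arctan ((s-1)/(s+1)) - s/(1+s^2) - s/(1+s^2)^2"
  unfolding rr_def by (subst arctan_shift) auto

lemma rr_a: "rr (758/625) > 0"
proof -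
  have y: "(758/625 - 1) / (758/625 + 1) = (133/1383::real)" by simp
  have q: "(758/625::real)/(1+(758/625)^2) + (758/625)/(1+(758/625)^2)^2 = 642316882500/931589805721" by (simp add: power2_eq_square)
  have p: "(133/1383::real) - (133/1383)^3/3 + (133/1383)^5/5 = 2425364019407203/25297692242135715" by (simp add: power_divide)
  have "arctan (133/1383::real) \<le> 133/1383 - (133/1383)^3/3 + (133/1383)^5/5"
    by (rule arctan_upper5) simp
  moreover have "3141592653588/1000000000000 \<le> pi" using pi_approx(1) by simp
  moreover have "rr (758/625) = pi/4 - arctan (133/1383) - (758/625)/(1+(758/625)^2) - (758/625)/(1+(758/625)^2)^2"
    using rr_alt[of "758/625"] y by simp
  ultimately show ?thesis using q p by linarith
qed

lemma rr_b: "rr (60661/50000) < 0"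
proof -
  have y: "(60661/50000 - 1) / (60661/50000 + 1) = (10661/110661::real)" by simp
  have q: "(60661/50000::real)/(1+(60661/50000)^2) + (60661/50000)/(1+(60661/50000)^2)^2 = 26326136729239050000/38189395602647400241" by (simp add: power2_eq_square)
  have p: "(10661/110661::real) - (10661/110661)^3/3 + (10661/110661)^5/5 - (10661/110661)^7/7 = 97588190200598517619087544528183276/1016089906966605605185287535203411105" by (simp add: power_divide)
  have "10661/110661 - (10661/110661)^3/3 + (10661/110661)^5/5 - (10661/110661)^7/7 \<le> arctan (10661/110661::real)"
    by (rule arctan_lower7) simp
  moreover have "pi \<le> 31415926535899/10000000000000" using pi_approx(2) by simp
  moreover have "rr (60661/50000) = pi/4 - arctan (10661/110661) - (60661/50000)/(1+(60661/50000)^2) - (60661/50000)/(1+(60661/50000)^2)^2"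
    using rr_alt[of "60661/50000"] y by simp
  ultimately show ?thesis using q p by linarith
qed

lemma rr_pos:
  assumes "0 \<le> s" "s \<le> 758/625"
  shows "rr s > 0"
proof -
  have "rr (758/625) \<le> rr s"
  proof (rule DERIV_nonpos_imp_nonincreasing[OF assms(2)])
    fix x :: real assume x: "s \<le> x" "x \<le> 758/625"
    have "x^2 \<le> (758/625)^2" using x assms by (intro power_mono) auto
    moreover have "(758/625::real)^2 \<le> 3" by (simp add: power2_eq_square)
    ultimately have "x^2 - 3 \<le> 0" by linarith
    then have "(x^2 - 3)/(1+x^2)^3 \<le> 0" by (intro divide_nonpos_pos) (auto simp: add_pos_nonneg)
    then show "\<exists>y. DERIV rr x :> y \<and> y \<le> 0" using rr_deriv by blast
  qed
  with rr_a show ?thesis by linarith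
qed

lemma rr_lim: "(rr \<longlongrightarrow> 0) at_top"
  unfolding rr_def[abs_def] by real_asymp

lemma rr_neg:
  assumes "60661/50000 \<le> s"
  shows "rr s < 0"
proof (cases "s^2 \<le> 3")
  case True
  have "rr s \<le> rr (60661/50000)"
  proof (rule DERIV_nonpos_imp_nonincreasing[OF assms])
    fix x :: real assume x: "60661/50000 \<le> x" "x \<le> s"
    have "x^2 \<le> s^2" using x by (intro power_mono) auto
    then have "x^2 - 3 \<le> 0" using True by linarith
    then have "(x^2 - 3)/(1+x^2)^3 \<le> 0" by (intro divide_nonpos_pos) (auto simp: add_pos_nonneg)
    then show "\<exists>y. DERIV rr x :> y \<and> y \<le> 0" using rr_deriv by blast
  qed
  with rr_b show ?thesis by linarith
next
  case False
  have s0: "s \<ge> 0" using assms by simp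
  have inc: "rr x \<le> rr y" if "s \<le> x" "x \<le> y" for x y
  proof (rule DERIV_nonneg_imp_nondecreasing[OF that(2)])
    fix z :: real assume z: "x \<le> z" "z \<le> y"
    have "s^2 \<le> z^2" using z that s0 by (intro power_mono) auto
    then have "z^2 - 3 \<ge> 0" using False by linarith
    then have "(z^2 - 3)/(1+z^2)^3 \<ge> 0" by (intro divide_nonneg_pos) (auto simp: add_pos_nonneg)
    then show "\<exists>d. DERIV rr z :> d \<and> 0 \<le> d" using rr_deriv by blast
  qed
  have "rr s < rr (s+1)"
  proof (rule DERIV_pos_imp_increasing[of s "s+1" rr])
    fix z :: real assume z: "s \<le> z" "z \<le> s + 1"
    have "s^2 \<le> z^2" using z s0 by (intro power_mono) auto
    then have "z^2 - 3 > 0" using False by linarith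
    then have "(z^2 - 3)/(1+z^2)^3 > 0" by (intro divide_pos_pos) (auto simp: add_pos_nonneg)
    then show "\<exists>d. DERIV rr z :> d \<and> 0 < d" using rr_deriv by blast
  qed simp
  moreover have "rr (s+1) \<le> 0"
  proof (rule tendsto_lowerbound[OF rr_lim])
    show "\<forall>\<^sub>F i in at_top. rr (s + 1) \<le> rr i"
      using eventually_ge_at_top[of "s+1"] by eventually_elim (rule inc, auto)
  qed simp
  ultimately show ?thesis by linarith
qed

lemma hh_inc:
  assumes "0 < x" "x < y" "y \<le> 758/625"
  shows "hh x < hh y"
proof (rule DERIV_pos_imp_increasing[OF assms(2)])
  fix z :: real assume z: "x \<le> z" "z \<le> y"
  have "rr z > 0" using z assms by (intro rr_pos) auto
  then have "z * rr z / pi > 0" using z assms by simp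
  then show "\<exists>d. DERIV hh z :> d \<and> 0 < d" using hh_deriv by blast
qed

lemma hh_dec:
  assumes "60661/50000 \<le> x" "x < y"
  shows "hh y < hh x"
proof (rule DERIV_neg_imp_decreasing[OF assms(2)])
  fix z :: real assume z: "x \<le> z" "z \<le> y"
  have "rr z < 0" using z assms by (intro rr_neg) auto
  moreover have "z > 0" using z assms by simp
  ultimately have "z * rr z / pi < 0" by (simp add: mult_pos_neg divide_neg_pos)
  then show "\<exists>d. DERIV hh z :> d \<and> d < 0" using hh_deriv by blast
qed

lemma hh_max_exists: "\<exists>s0. 758/625 \<le> s0 \<and> s0 \<le> 60661/50000 \<and> (\<forall>t>0. hh t \<le> hh s0)"
proof -
  have "continuous_on {758/625..60661/50000} hh"
    by (rule DERIV_atLeastAtMost_imp_continuous_on) (use hh_deriv in blast)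
  then obtain s0 where s0: "s0 \<in> {758/625..60661/50000}" and mx: "\<forall>y\<in>{758/625..60661/50000}. hh y \<le> hh s0"
    using continuous_attains_sup[of "{758/625..60661/50000::real}" hh] by auto
  have "hh t \<le> hh s0" if "t > 0" for t
  proof -
    consider "t < 758/625" | "t \<in> {758/625..60661/50000}" | "t > 60661/50000" by force
    then show ?thesis
    proof cases
      case 1
      have "hh t < hh (758/625)" using hh_inc[of t "758/625"] 1 that by simp
      moreover have "hh (758/625) \<le> hh s0" using mx by simp
      ultimately show ?thesis by simp
    next
      case 2 then show ?thesis using mx by simp
    next
      case 3
      have "hh t < hh (60661/50000)" using hh_dec[of "60661/50000" t] 3 by simp
      moreover have "hh (60661/50000) \<le> hh s0" using mx by simp
      ultimately show ?thesis by simp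
    qed
  qed
  then show ?thesis using s0 by auto
qed

lemma hh_max_loc:
  assumes "s > 0" "\<forall>t>0. hh t \<le> hh s"
  shows "758/625 \<le> s \<and> s \<le> 60661/50000"
proof (rule ccontr)
  assume "\<not> ?thesis"
  then consider "s < 758/625" | "s > 60661/50000" by force
  then show False
  proof cases
    case 1
    then have "hh s < hh (758/625)" using hh_inc[of s "758/625"] assms by simp
    moreover have "hh (758/625) \<le> hh s" using assms(2)[rule_format, of "758/625"] by simp
    ultimately show False by linarith
  next
    case 2
    then have "hh s < hh (60661/50000)" using hh_dec[of "60661/50000" s] by simp
    moreover have "hh (60661/50000) \<le> hh s" using assms(2)[rule_format, of "60661/50000"] by simp
    ultimately show False by linarith
  qed
qed

lemma F_le: "arctan s + s/(1+s^2) \<le> pi/2"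
proof -
  have dF: "DERIV (\<lambda>s. arctan s + s/(1+s^2)) x :> 1/(1+x^2) + (1-x^2)/(1+x^2)^2" for x :: real
    by (rule DERIV_add[OF d1 d2])
  have nn: "1/(1+x^2) + (1-x^2)/(1+x^2)^2 \<ge> 0" for x :: real
  proof -
    have p: "(1+x^2) > 0" by (simp add: add_pos_nonneg)
    define t where "t = 1 + x^2"
    have t: "t \<noteq> 0" using p by (simp add: t_def)
    have x2: "x^2 = t - 1" unfolding t_def by simp
    have "1/(1+x^2) + (1-x^2)/(1+x^2)^2 = 2/(1+x^2)^2"
      unfolding t_def[symmetric] x2 using t by (simp add: field_simps power2_eq_square)
    then show ?thesis by simp
  qed
  have mono: "arctan s + s/(1+s^2) \<le> arctan y + y/(1+y^2)" if "s \<le> y" for y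
    by (rule DERIV_nonneg_imp_nondecreasing[OF that, of "\<lambda>s. arctan s + s/(1+s^2)"]) (use dF nn in blast)
  have lim: "((\<lambda>s. arctan s + s/(1+s^2)) \<longlongrightarrow> pi/2) at_top" by real_asymp
  show ?thesis
  proof (rule tendsto_lowerbound[OF lim])
    show "\<forall>\<^sub>F i in at_top. arctan s + s / (1 + s\<^sup>2) \<le> arctan i + i / (1 + i\<^sup>2)"
      using eventually_ge_at_top[of s] by eventually_elim (rule mono)
  qed simp
qed

lemma speed_eq:
  assumes II: "II > 0" and l: "l > 0"
  shows "speed II l = 16/II * hh (l * sqrt II / 2)"
proof -
  define s where "s = l * sqrt II / 2"
  have s: "s > 0" using II l by (simp add: s_def)
  let ?f = "\<lambda>u. indicator {0<..} u * (u^2 * Phi (- (u * s)) * phi u)"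
  have eqf: "(\<lambda>u. indicator {0<..} u *\<^sub>R (u^2 * Phi (- (u * l * sqrt II) / 2) * phi u)) = ?f"
  proof
    fix u :: real
    have h: "- (u * l * sqrt II) / 2 = - (u * s)" by (simp add: s_def)
    then show "indicator {0<..} u *\<^sub>R (u^2 * Phi (- (u * l * sqrt II) / 2) * phi u) = ?f u"
      unfolding h by simp
  qed
  define I where "I = (pi/4 - (arctan s + s/(1+s^2))/2) / pi"
  have "pi/4 - (arctan s + s/(1+s^2))/2 \<ge> 0" using F_le[of s] by (simp add: field_simps)
  then have I0: "I \<ge> 0" unfolding I_def by simp
  have hb: "has_bochner_integral lborel ?f I"
  proof (rule has_bochner_integral_nn_integral)
    show "?f \<in> borel_measurable lborel" by measurable
    show "AE x in lborel. 0 \<le> ?f x" by (auto simp: Phi_nonneg phi_nonneg)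
    show "0 \<le> I" by (rule I0)
    show "(\<integral>\<^sup>+x. ennreal (?f x) \<partial>lborel) = ennreal I" unfolding I_def by (rule I2_nn) (use s in simp)
  qed
  have sp: "speed II l = 4 * l^2 * I"
    unfolding speed_def set_lebesgue_integral_def eqf using has_bochner_integral_integral_eq[OF hb] by simp
  have l2: "l^2 = 4 * s^2 / II" using II by (simp add: s_def power_mult_distrib field_simps)
  have hs: "hh s = s^2 * I" by (simp add: hh_def I_def)
  show ?thesis unfolding s_def[symmetric] hs sp l2 using II by (simp add: field_simps)
qed

lemma acc_eq:
  assumes II: "II > 0" and l: "l > 0"
  shows "acc_rate II l = 1 - 2 * arctan (l * sqrt II / 2) / pi"
proof -
  define s where "s = l * sqrt II / 2"
  have s: "s > 0" using II l by (simp add: s_def)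
  let ?f = "\<lambda>u. indicator {0<..} u * (Phi (- (u * s)) * phi u)"
  have eqf: "(\<lambda>u. indicator {0<..} u *\<^sub>R (Phi (- (u * l * sqrt II) / 2) * phi u)) = ?f"
  proof
    fix u :: real
    have h: "- (u * l * sqrt II) / 2 = - (u * s)" by (simp add: s_def)
    then show "indicator {0<..} u *\<^sub>R (Phi (- (u * l * sqrt II) / 2) * phi u) = ?f u"
      unfolding h by simp
  qed
  define I where "I = (pi/2 - arctan s) / (2*pi)"
  have I0: "I \<ge> 0" unfolding I_def using arctan_ubound[of s] by simp
  have hb: "has_bochner_integral lborel ?f I"
  proof (rule has_bochner_integral_nn_integral)
    show "?f \<in> borel_measurable lborel" by measurable
    show "AE x in lborel. 0 \<le> ?f x" by (auto simp: Phi_nonneg phi_nonneg)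
    show "0 \<le> I" by (rule I0)
    show "(\<integral>\<^sup>+x. ennreal (?f x) \<partial>lborel) = ennreal I" unfolding I_def by (rule J0_nn) (use s in simp)
  qed
  have "acc_rate II l = 4 * I"
    unfolding acc_rate_def set_lebesgue_integral_def eqf using has_bochner_integral_integral_eq[OF hb] by simp
  then show ?thesis unfolding I_def s_def[symmetric] by (simp add: field_simps)
qed

lemma acc_bounds:
  assumes "758/625 \<le> s" "s \<le> 60661/50000"
  shows "round (1000 * (1 - 2 * arctan s / pi)) = 439"
proof -
  have s0: "s > 0" using assms by simp
  have m1: "arctan (758/625) \<le> arctan s" using assms(1) by (simp add: arctan_le_iff)
  have m2: "arctan s \<le> arctan (60661/50000)" using assms(2) by (simp add: arctan_le_iff)
  have ya: "(758/625 - 1) / (758/625 + 1) = (133/1383::real)" by simp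
  have yb: "(60661/50000 - 1) / (60661/50000 + 1) = (10661/110661::real)" by simp
  have a1: "arctan (758/625) = pi/4 + arctan (133/1383)" using arctan_shift[of "758/625"] ya by simp
  have b1: "arctan (60661/50000) = pi/4 + arctan (10661/110661)" using arctan_shift[of "60661/50000"] yb by simp
  have la: "133/1383 - (133/1383)^3/3 + (133/1383)^5/5 - (133/1383)^7/7 \<le> arctan (133/1383::real)"
    by (rule arctan_lower7) simp
  have pa: "(133/1383::real) - (133/1383)^3/3 + (133/1383)^5/5 - (133/1383)^7/7 = 4638966555100362590812/48386617676918318587635"
    by (simp add: power_divide)
  have ub: "arctan (10661/110661::real) \<le> 10661/110661 - (10661/110661)^3/3 + (10661/110661)^5/5"
    by (rule arctan_upper5) simp
  have pb: "(10661/110661::real) - (10661/110661)^3/3 + (10661/110661)^5/5 = 7969079012645793906666971/82974177595048320031346505"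
    by (simp add: power_divide)
  have pil: "3141592653588/1000000000000 \<le> pi" using pi_approx(1) by simp
  have piu: "pi \<le> 31415926535899/10000000000000" using pi_approx(2) by simp
  have A1: "2000 * arctan s \<le> 5615/10 * pi"
    using m2 b1 ub pb pil by linarith
  have A2: "2000 * arctan s > 5605/10 * pi"
    using m1 a1 la pa piu by linarith
  have e: "1000 * (1 - 2 * arctan s / pi) = (1000 * pi - 2000 * arctan s) / pi" by (simp add: field_simps)
  show ?thesis
  proof (rule round_unique)
    show "real_of_int 439 \<le> 1000 * (1 - 2 * arctan s / pi) + 1/2"
      unfolding e using A1 by (simp add: field_simps)
    show "1000 * (1 - 2 * arctan s / pi) - 1/2 < real_of_int 439"
      unfolding e using A2 by (simp add: field_simps)
  qed
qed

theorem corollary1: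
  fixes II :: real
  assumes "II > 0"
  shows "(\<exists>l>0. \<forall>l'>0. speed II l' \<le> speed II l) \<and>
         (\<forall>l>0. (\<forall>l'>0. speed II l' \<le> speed II l) \<longrightarrow>
            round (1000 * (l * sqrt II)) = 2426 \<and>
            round (1000 * acc_rate II l) = 439)"
proof
  have sq: "sqrt II > 0" using assms by simp
  show "\<exists>l>0. \<forall>l'>0. speed II l' \<le> speed II l"
  proof -
    obtain s0 where s0: "758/625 \<le> s0" "s0 \<le> 60661/50000" and mx: "\<forall>t>0. hh t \<le> hh s0"
      using hh_max_exists by blast
    define l0 where "l0 = 2 * s0 / sqrt II"
    have l0: "l0 > 0" using s0 sq by (simp add: l0_def)
    have ls: "l0 * sqrt II / 2 = s0" using sq by (simp add: l0_def)
    have "speed II l' \<le> speed II l0" if "l' > 0" for l'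
    proof -
      have "hh (l' * sqrt II / 2) \<le> hh s0" using mx that sq by simp
      then show ?thesis using speed_eq[OF assms that] speed_eq[OF assms l0] ls assms
        by (simp add: divide_le_cancel)
    qed
    then show ?thesis using l0 by blast
  qed
  show "\<forall>l>0. (\<forall>l'>0. speed II l' \<le> speed II l) \<longrightarrow>
            round (1000 * (l * sqrt II)) = 2426 \<and> round (1000 * acc_rate II l) = 439"
  proof (intro allI impI)
    fix l :: real assume l: "l > 0" and mx: "\<forall>l'>0. speed II l' \<le> speed II l"
    define s where "s = l * sqrt II / 2"
    have s: "s > 0" using l sq by (simp add: s_def)
    have "hh t \<le> hh s" if "t > 0" for t
    proof -
      define l' where "l' = 2 * t / sqrt II"
      have l': "l' > 0" using that sq by (simp add: l'_def)
      have ts: "l' * sqrt II / 2 = t" using sq by (simp add: l'_def)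
      have "speed II l' \<le> speed II l" using mx l' by blast
      then have "16/II * hh t \<le> 16/II * hh s"
        using speed_eq[OF assms l'] speed_eq[OF assms l] ts by (simp add: s_def)
      then show ?thesis using assms by (simp add: divide_le_cancel)
    qed
    then have sb: "758/625 \<le> s \<and> s \<le> 60661/50000" using hh_max_loc s by blast
    have r1: "round (1000 * (l * sqrt II)) = 2426"
    proof (rule round_unique)
      have "l * sqrt II = 2 * s" by (simp add: s_def)
      then show "real_of_int 2426 \<le> 1000 * (l * sqrt II) + 1/2"
           "1000 * (l * sqrt II) - 1/2 < real_of_int 2426" using sb by auto
    qed
    have r2: "round (1000 * acc_rate II l) = 439"
      unfolding acc_eq[OF assms l] s_def[symmetric] using sb by (intro acc_bounds) auto
    show "round (1000 * (l * sqrt II)) = 2426 \<and> round (1000 * acc_rate II l) = 439"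
      using r1 r2 by blast
  qed
qed

end
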